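(* In the algebra $\mathcal O_q$ defined in the context, with $B_\delta=q^{-2}\mathcal W_1\mathcal W_0-\mathcal W_0\mathcal W_1$, the following hold for all integers $n\ge1$: $$\mathcal W_{-n}=\mathcal W_n-\frac{(q-q^{-1})\mathcal W_0\tilde{\mathcal G}_n}{(q^2-q^{-2})^2}+\frac{q^2[B_\delta,\mathcal W_{1-n}]}{(q^2-q^{-2})^2},\qquad \mathcal W_{n+1}=\mathcal W_{1-n}-\frac{(q-q^{-1})\mathcal W_1\tilde{\mathcal G}_n}{(q^2-q^{-2})^2}-\frac{[B_\delta,\mathcal W_n]}{(q^2-q^{-2})^2}.$$
   Context: All algebras are associative and unital over a field $\mathbb F$; $q\in\mathbb F$ is nonzero and not a root of unity. For elements $X,Y$ of an algebra, $[X,Y]=XY-YX$ and $[X,Y]_q=qXY-q^{-1}YX$. Let $\rho=-(q^2-q^{-2})^2$. The algebra $\mathcal O_q$ is defined by generators $\mathcal W_{-k},\mathcal W_{k+1},\mathcal G_{k+1},\tilde{\mathcal G}_{k+1}$ ($k\in\mathbb N$) and the following relations for all $k,\ell\in\mathbb N$: $[\mathcal W_0,\mathcal W_{k+1}]=[\mathcal W_{-k},\mathcal W_1]=(\tilde{\mathcal G}_{k+1}-\mathcal G_{k+1})/(q+q^{-1})$; $[\mathcal W_0,\mathcal G_{k+1}]_q=[\tilde{\mathcal G}_{k+1},\mathcal W_0]_q=\rho\mathcal W_{-k-1}-\rho\mathcal W_{k+1}$; $[\mathcal G_{k+1},\mathcal W_1]_q=[\mathcal W_1,\tilde{\mathcal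 G}_{k+1}]_q=\rho\mathcal W_{k+2}-\rho\mathcal W_{-k}$; $[\mathcal W_{-k},\mathcal W_{-\ell}]=0$, $[\mathcal W_{k+1},\mathcal W_{\ell+1}]=0$; $[\mathcal W_{-k},\mathcal W_{\ell+1}]+[\mathcal W_{k+1},\mathcal W_{-\ell}]=0$; $[\mathcal W_{-k},\mathcal G_{\ell+1}]+[\mathcal G_{k+1},\mathcal W_{-\ell}]=0$; $[\mathcal W_{-k},\tilde{\mathcal G}_{\ell+1}]+[\tilde{\mathcal G}_{k+1},\mathcal W_{-\ell}]=0$; $[\mathcal W_{k+1},\mathcal G_{\ell+1}]+[\mathcal G_{k+1},\mathcal W_{\ell+1}]=0$; $[\mathcal W_{k+1},\tilde{\mathcal G}_{\ell+1}]+[\tilde{\mathcal G}_{k+1},\mathcal W_{\ell+1}]=0$; $[\mathcal G_{k+1},\mathcal G_{\ell+1}]=0$, $[\tilde{\mathcal G}_{k+1},\tilde{\mathcal G}_{\ell+1}]=0$; $[\tilde{\mathcal G}_{k+1},\mathcal G_{\ell+1}]+[\mathcal G_{k+1},\tilde{\mathcal G}_{\ell+1}]=0$. *)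

theory Defs
  imports Main
begin

text \<open>An associative unital algebra over a field 'k is modelled as a ring 'a together
with a unital ring homomorphism emb from 'k into the centre of 'a
(scalar multiplication c x = emb c * x).\<close>

definition is_alg_emb :: "('k::field \<Rightarrow> 'a::ring_1) \<Rightarrow> bool" where
  "is_alg_emb emb \<longleftrightarrow> emb 1 = 1 \<and> (\<forall>a b. emb (a + b) = emb a + emb b)
     \<and> (\<forall>a b. emb (a * b) = emb a * emb b) \<and> (\<forall>c x. emb c * x = x * emb c)"

definition comm :: "'a::ring_1 \<Rightarrow> 'a \<Rightarrow> 'a" where
  "comm x y = x * y - y * x"

definition qcomm :: "('k::field \<Rightarrow> 'a::ring_1) \<Rightarrow> 'k \<Rightarrow> 'a \<Rightarrow> 'a \<Rightarrow> 'a" where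
  "qcomm emb q x y = emb q * x * y - emb (inverse q) * y * x"

definition rho :: "'k::field \<Rightarrow> 'k" where
  "rho q = - ((q ^ 2 - inverse (q ^ 2)) ^ 2)"

text \<open>Wm k = W_{-k}, Wp k = W_{k+1}, G k = G_{k+1}, Gt k = tilde G_{k+1}.\<close>
definition Oq_rels :: "('k::field \<Rightarrow> 'a::ring_1) \<Rightarrow> 'k \<Rightarrow> (nat \<Rightarrow> 'a) \<Rightarrow> (nat \<Rightarrow> 'a)
    \<Rightarrow> (nat \<Rightarrow> 'a) \<Rightarrow> (nat \<Rightarrow> 'a) \<Rightarrow> bool" where
  "Oq_rels emb q Wm Wp G Gt \<longleftrightarrow>
    (\<forall>k. comm (Wm 0) (Wp k) = emb (inverse (q + inverse q)) * (Gt k - G k)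
       \<and> comm (Wm k) (Wp 0) = emb (inverse (q + inverse q)) * (Gt k - G k))
  \<and> (\<forall>k. qcomm emb q (Wm 0) (G k) = emb (rho q) * Wm (Suc k) - emb (rho q) * Wp k
       \<and> qcomm emb q (Gt k) (Wm 0) = emb (rho q) * Wm (Suc k) - emb (rho q) * Wp k)
  \<and> (\<forall>k. qcomm emb q (G k) (Wp 0) = emb (rho q) * Wp (Suc k) - emb (rho q) * Wm k
       \<and> qcomm emb q (Wp 0) (Gt k) = emb (rho q) * Wp (Suc k) - emb (rho q) * Wm k)
  \<and> (\<forall>k l. comm (Wm k) (Wm l) = 0 \<and> comm (Wp k) (Wp l) = 0
       \<and> comm (Wm k) (Wp l) + comm (Wp k) (Wm l) = 0
       \<and> comm (Wm k) (G l) + comm (G k) (Wm l) = 0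
       \<and> comm (Wm k) (Gt l) + comm (Gt k) (Wm l) = 0
       \<and> comm (Wp k) (G l) + comm (G k) (Wp l) = 0
       \<and> comm (Wp k) (Gt l) + comm (Gt k) (Wp l) = 0
       \<and> comm (G k) (G l) = 0 \<and> comm (Gt k) (Gt l) = 0
       \<and> comm (Gt k) (G l) + comm (G k) (Gt l) = 0)"

end

theory Submission
  imports Defs
begin

lemma embL:
  assumes "is_alg_emb e"
  shows "e 0 = 0" "e (-a) = - e a" "e (a-b) = e a - e b" "e (a+b) = e a + e b"
    "e (a*b) = e a * e b" "e 1 = 1" "e c * x = x * e c"
proof -
  have A1: "\<And>a b. e (a+b) = e a + e b" and A2: "\<And>a b. e (a*b) = e a * e b"
    and A3: "e 1 = 1" and A4: "\<And>c x. e c * x = x * e c"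
    using assms unfolding is_alg_emb_def by blast+
  have Z: "e 0 = 0" using A1[of 0 0] by simp
  have N: "\<And>a. e (-a) = - e a"
  proof -
    fix a have "e a + e (-a) = 0" using A1[of a "-a"] Z by simp
    then show "e (-a) = - e a" by (simp add: add_eq_0_iff)
  qed
  show "e 0 = 0" by (rule Z)
  show "e (-a) = - e a" by (rule N)
  show "e (a+b) = e a + e b" by (rule A1)
  show "e (a*b) = e a * e b" by (rule A2)
  show "e 1 = 1" by (rule A3)
  show "e c * x = x * e c" by (rule A4)
  show "e (a-b) = e a - e b" using A1[of a "-b"] N by simp
qed

lemma key1:
  fixes e :: "'k::field \<Rightarrow> 'a::ring_1"
  assumes E: "is_alg_emb e" and q: "q \<noteq> 0" and qq: "q + inverse q \<noteq> 0"
    and XY: "X*Y = Y*X"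
    and C: "Y*P - P*Y = e (inverse (q + inverse q)) * (Gt - G)"
    and R: "e q * X * G - e (inverse q) * G * X = e q * Gt * X - e (inverse q) * X * Gt"
  shows "e q * comm (e (inverse (q^2)) * P * X - X * P) Y = X*Gt - Gt*X"
proof -
  note L = embL[OF E]
  define c where "c = inverse (q + inverse q)"
  define T where "T = Gt - G"
  have cen: "\<And>a x y. x * (e a * y) = e a * (x * y)"
    by (metis L(7) mult.assoc)
  have h0: "comm (e (inverse (q^2)) * P * X - X * P) Y
      = e (inverse (q^2)) * ((P*Y - Y*P)*X) - X*(P*Y - Y*P)"
  proof -
    have a: "P*X*Y = P*Y*X" using XY by (simp add: mult.assoc)
    have b: "Y*X*P = X*Y*P" using XY by simp
    have c1: "Y * (e (inverse (q^2)) * (P*X)) = e (inverse (q^2)) * (Y * (P*X))"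
      using cen by blast
    have c2: "P*(X*Y) = P*(Y*X)" using XY by simp
    have c3: "Y*(X*P) = X*(Y*P)" using XY by (metis mult.assoc)
    show ?thesis unfolding comm_def
      by (simp add: algebra_simps c1 c2 c3)
  qed
  have PY: "P*Y - Y*P = - (e c * T)" using C unfolding c_def T_def
    by (metis minus_diff_eq)
  have h1: "comm (e (inverse (q^2)) * P * X - X * P) Y
      = e c * (X*T - e (inverse (q^2)) * T * X)"
  proof -
    have c1: "e (inverse (q^2)) * (e c * (T*X)) = e c * (e (inverse (q^2)) * (T*X))"
      by (simp add: mult.assoc[symmetric] L(5)[symmetric] mult.commute)
    have c2: "X * (e c * T) = e c * (X * T)" using cen by blast
    show ?thesis unfolding h0 PY by (simp add: algebra_simps c1 c2)
  qed
  have qi: "e q * e (inverse (q^2)) = e (inverse q)"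
  proof -
    have "q * inverse (q^2) = inverse q" using q by (simp add: power2_eq_square)
    then show ?thesis by (metis L(5))
  qed
  have h2: "e q * comm (e (inverse (q^2)) * P * X - X * P) Y
      = e c * (e q * X*T - e (inverse q) * T * X)"
  proof -
    have c1: "\<And>w. e q * (e c * w) = e c * (e q * w)"
      by (simp add: mult.assoc[symmetric] L(5)[symmetric] mult.commute)
    have c2: "\<And>w. e q * (e (inverse (q^2)) * w) = e (inverse q) * w"
      by (simp add: mult.assoc[symmetric] qi)
    show ?thesis unfolding h1 by (simp add: algebra_simps c1 c2)
  qed
  have h3: "e q * X*T - e (inverse q) * T * X = e (q + inverse q) * (X*Gt - Gt*X)"
  proof -
    have "e q * X*T - e (inverse q) * T * X
        = e q * X * Gt - e (inverse q) * Gt * X - (e q * X * G - e (inverse q) * G * X)"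
      unfolding T_def by (simp add: algebra_simps)
    also have "\<dots> = e q * X * Gt - e (inverse q) * Gt * X - (e q * Gt * X - e (inverse q) * X * Gt)"
      using R by simp
    also have "\<dots> = e (q + inverse q) * (X*Gt - Gt*X)"
      by (simp add: L(4) algebra_simps)
    finally show ?thesis .
  qed
  have ci: "e c * e (q + inverse q) = 1"
    using qq unfolding c_def by (simp add: L(5)[symmetric] L(6))
  show ?thesis unfolding h2 h3 by (simp add: mult.assoc[symmetric] ci)
qed


lemma key2:
  fixes e :: "'k::field \<Rightarrow> 'a::ring_1"
  assumes E: "is_alg_emb e" and q: "q \<noteq> 0" and qq: "q + inverse q \<noteq> 0"
    and PY: "P*Y = Y*P"
    and C: "X*Y - Y*X = e (inverse (q + inverse q)) * (Gt - G)"
    and R: "e q * G * P - e (inverse q) * P * G = e q * P * Gt - e (inverse q) * Gt * P"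
  shows "e q * comm (e (inverse (q^2)) * P * X - X * P) Y = P*Gt - Gt*P"
proof -
  note L = embL[OF E]
  define c where "c = inverse (q + inverse q)"
  define T where "T = Gt - G"
  have cen: "\<And>a x y. x * (e a * y) = e a * (x * y)"
    by (metis L(7) mult.assoc)
  have h0: "comm (e (inverse (q^2)) * P * X - X * P) Y
      = e (inverse (q^2)) * (P*(X*Y - Y*X)) - (X*Y - Y*X)*P"
  proof -
    have c1: "Y * (e (inverse (q^2)) * (P*X)) = e (inverse (q^2)) * (Y * (P*X))"
      using cen by blast
    have c2: "Y*(P*X) = P*(Y*X)" using PY by (metis mult.assoc)
    have c3: "X*(P*Y) = X*(Y*P)" using PY by simp
    show ?thesis unfolding comm_def
      by (simp add: algebra_simps c1 c2 c3)
  qed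
  have XY: "X*Y - Y*X = e c * T" using C unfolding c_def T_def by simp
  have h1: "comm (e (inverse (q^2)) * P * X - X * P) Y
      = e c * (e (inverse (q^2)) * P * T - T * P)"
  proof -
    have c0: "P * (e c * T) = e c * (P*T)" by (rule cen)
    have c1: "e (inverse (q^2)) * (P * (e c * T)) = e c * (e (inverse (q^2)) * (P*T))"
      unfolding c0 by (simp add: mult.assoc[symmetric] L(5)[symmetric] mult.commute)
    show ?thesis unfolding h0 XY by (simp add: algebra_simps c1)
  qed
  have qi: "e q * e (inverse (q^2)) = e (inverse q)"
  proof -
    have "q * inverse (q^2) = inverse q" using q by (simp add: power2_eq_square)
    then show ?thesis by (metis L(5))
  qed
  have h2: "e q * comm (e (inverse (q^2)) * P * X - X * P) Y
      = e c * (e (inverse q) * P * T - e q * T * P)"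
  proof -
    have c1: "\<And>w. e q * (e c * w) = e c * (e q * w)"
      by (simp add: mult.assoc[symmetric] L(5)[symmetric] mult.commute)
    have c2: "\<And>w. e q * (e (inverse (q^2)) * w) = e (inverse q) * w"
      by (simp add: mult.assoc[symmetric] qi)
    show ?thesis unfolding h1 by (simp add: algebra_simps c1 c2)
  qed
  have h3: "e (inverse q) * P * T - e q * T * P = e (q + inverse q) * (P*Gt - Gt*P)"
  proof -
    have "e (inverse q) * P * T - e q * T * P
        = e (inverse q) * P * Gt - e q * Gt * P + (e q * G * P - e (inverse q) * P * G)"
      unfolding T_def by (simp add: algebra_simps)
    also have "\<dots> = e (inverse q) * P * Gt - e q * Gt * P + (e q * P * Gt - e (inverse q) * Gt * P)"
      using R by simp
    also have "\<dots> = e (q + inverse q) * (P*Gt - Gt*P)"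
      by (simp add: L(4) algebra_simps)
    finally show ?thesis .
  qed
  have ci: "e c * e (q + inverse q) = 1"
    using qq unfolding c_def by (simp add: L(5)[symmetric] L(6))
  show ?thesis unfolding h2 h3 by (simp add: mult.assoc[symmetric] ci)
qed

lemma fin1:
  fixes e :: "'k::field \<Rightarrow> 'a::ring_1"
  assumes E: "is_alg_emb e" and q: "q \<noteq> 0" and D: "(q^2 - inverse (q^2))^2 \<noteq> 0"
    and R: "e q * (A*X) - e (inverse q) * (X*A) = e (rho q) * U - e (rho q) * V"
    and K: "e q * Cm = X*A - A*X"
  shows "U = V - e ((q - inverse q) / (q^2 - inverse (q^2))^2) * X * A
            + e (q^2 / (q^2 - inverse (q^2))^2) * Cm"
proof -
  note L = embL[OF E]
  define D where "D = (q^2 - inverse (q^2))^2"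
  have D0: "D \<noteq> 0" using D unfolding D_def .
  have UV: "U - V = e (-1/D) * (e q*(A*X) - e (inverse q)*(X*A))"
  proof -
    have "e (-1/D) * (e (rho q) * U - e (rho q) * V) = e ((-1/D) * rho q) * (U - V)"
      by (simp only: L(5) mult.assoc right_diff_distrib)
    also have "(-1/D) * rho q = 1" using D0 unfolding rho_def D_def by simp
    finally show ?thesis using R L(6) by simp
  qed
  have S1: "e (q^2/D) * Cm = e (q/D) * (X*A) - e (q/D) * (A*X)"
  proof -
    have "q^2/D = (q/D) * q" by (simp add: power2_eq_square)
    then have "e (q^2/D) * Cm = e (q/D) * (e q * Cm)" by (simp only: L(5) mult.assoc)
    then show ?thesis unfolding K by (simp add: algebra_simps)
  qed
  have S2: "e (-1/D) * (e q*(A*X) - e (inverse q)*(X*A))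
       = - (e (q/D) * (A*X)) + e (inverse q / D) * (X*A)"
  proof -
    have a: "e (-1/D) * (e q * w) = - (e (q/D) * w)" for w
      by (simp add: mult.assoc[symmetric] L(5)[symmetric] L(2))
    have b: "e (-1/D) * (e (inverse q) * w) = - (e (inverse q/D) * w)" for w
      by (simp add: mult.assoc[symmetric] L(5)[symmetric] L(2))
    show ?thesis by (simp only: right_diff_distrib a b) (simp add: algebra_simps)
  qed
  have S3: "e (inverse q / D) = e (q/D) - e ((q - inverse q) / D)"
    by (simp add: L(3)[symmetric] diff_divide_distrib)
  have "U = V + (U - V)" by simp
  also have "\<dots> = V - e ((q - inverse q) / D) * X * A + e (q^2/D) * Cm"
    unfolding UV S2 S3 S1 by (simp add: algebra_simps)
  finally show ?thesis unfolding D_def .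
qed

lemma fin2:
  fixes e :: "'k::field \<Rightarrow> 'a::ring_1"
  assumes E: "is_alg_emb e" and q: "q \<noteq> 0" and D: "(q^2 - inverse (q^2))^2 \<noteq> 0"
    and R: "e q * (P*A) - e (inverse q) * (A*P) = e (rho q) * U - e (rho q) * V"
    and K: "e q * Cm = P*A - A*P"
  shows "U = V - e ((q - inverse q) / (q^2 - inverse (q^2))^2) * P * A
            - e (1 / (q^2 - inverse (q^2))^2) * Cm"
proof -
  note L = embL[OF E]
  define D where "D = (q^2 - inverse (q^2))^2"
  have D0: "D \<noteq> 0" using D unfolding D_def .
  have UV: "U - V = e (-1/D) * (e q*(P*A) - e (inverse q)*(A*P))"
  proof -
    have "e (-1/D) * (e (rho q) * U - e (rho q) * V) = e ((-1/D) * rho q) * (U - V)"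
      by (simp only: L(5) mult.assoc right_diff_distrib)
    also have "(-1/D) * rho q = 1" using D0 unfolding rho_def D_def by simp
    finally show ?thesis using R L(6) by simp
  qed
  have S1: "e (1/D) * Cm = e (inverse q/D) * (P*A) - e (inverse q/D) * (A*P)"
  proof -
    have "1/D = (inverse q/D) * q" using q by simp
    then have "e (1/D) * Cm = e (inverse q/D) * (e q * Cm)" by (simp only: L(5) mult.assoc)
    then show ?thesis unfolding K by (simp add: algebra_simps)
  qed
  have S2: "e (-1/D) * (e q*(P*A) - e (inverse q)*(A*P))
       = - (e (q/D) * (P*A)) + e (inverse q / D) * (A*P)"
  proof -
    have a: "e (-1/D) * (e q * w) = - (e (q/D) * w)" for w
      by (simp add: mult.assoc[symmetric] L(5)[symmetric] L(2))
    have b: "e (-1/D) * (e (inverse q) * w) = - (e (inverse q/D) * w)" for w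
      by (simp add: mult.assoc[symmetric] L(5)[symmetric] L(2))
    show ?thesis by (simp only: right_diff_distrib a b) (simp add: algebra_simps)
  qed
  have S3: "e (q/D) = e ((q - inverse q) / D) + e (inverse q / D)"
    by (simp add: L(4)[symmetric] add_divide_distrib[symmetric])
  have "U = V + (U - V)" by simp
  also have "\<dots> = V - e ((q - inverse q) / D) * P * A - e (1/D) * Cm"
    unfolding UV S2 S3 S1 by (simp add: algebra_simps)
  finally show ?thesis unfolding D_def .
qed


theorem lemma11p5:
  fixes emb :: "'k::field \<Rightarrow> 'a::ring_1" and q :: 'k
    and Wm Wp G Gt :: "nat \<Rightarrow> 'a" and n :: nat
  assumes "is_alg_emb emb"
    and "q \<noteq> 0" and "\<forall>m::nat. m > 0 \<longrightarrow> q ^ m \<noteq> 1"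
    and "Oq_rels emb q Wm Wp G Gt"
    and "n \<ge> 1"
  defines "Bd \<equiv> emb (inverse (q^2)) * Wp 0 * Wm 0 - Wm 0 * Wp 0"
  shows "Wm n = Wp (n - 1)
            - emb ((q - inverse q) / (q^2 - inverse (q^2))^2) * Wm 0 * Gt (n - 1)
            + emb (q^2 / (q^2 - inverse (q^2))^2) * comm Bd (Wm (n - 1))
         \<and> Wp n = Wm (n - 1)
            - emb ((q - inverse q) / (q^2 - inverse (q^2))^2) * Wp 0 * Gt (n - 1)
            - emb (1 / (q^2 - inverse (q^2))^2) * comm Bd (Wp (n - 1))"
proof -
  note E = assms(1) and q = assms(2) and O = assms(4)
  obtain k where nk: "n = Suc k" using assms(5) by (cases n) auto
  have q4: "q^4 \<noteq> 1" using assms(3)[rule_format, of 4] by simp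
  have q4e: "q^4 = q^2 * q^2" using power_add[of q 2 2] by simp
  have qq: "q + inverse q \<noteq> 0"
  proof
    assume "q + inverse q = 0"
    then have "q * (q + inverse q) = 0" by simp
    then have "q * q + 1 = 0" using q by (simp add: distrib_left)
    then have "q * q = -1" by (simp add: eq_neg_iff_add_eq_0)
    then have "q^2 = -1" by (simp add: power2_eq_square)
    then have "q^4 = 1" using q4e by simp
    with q4 show False by simp
  qed
  have D: "(q^2 - inverse (q^2))^2 \<noteq> 0"
  proof
    assume "(q^2 - inverse (q^2))^2 = 0"
    then have "q^2 = inverse (q^2)" by simp
    then have "q^2 * q^2 = 1" using q by (metis power_not_zero right_inverse)
    then have "q^4 = 1" by (simp only: q4e)
    with q4 show False by simp
  qed
  have r1: "comm (Wm k) (Wp 0) = emb (inverse (q + inverse q)) * (Gt k - G k)"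
    and r1b: "comm (Wm 0) (Wp k) = emb (inverse (q + inverse q)) * (Gt k - G k)"
    and r2: "qcomm emb q (Wm 0) (G k) = emb (rho q) * Wm (Suc k) - emb (rho q) * Wp k"
    and r3: "qcomm emb q (Gt k) (Wm 0) = emb (rho q) * Wm (Suc k) - emb (rho q) * Wp k"
    and r4: "qcomm emb q (G k) (Wp 0) = emb (rho q) * Wp (Suc k) - emb (rho q) * Wm k"
    and r5: "qcomm emb q (Wp 0) (Gt k) = emb (rho q) * Wp (Suc k) - emb (rho q) * Wm k"
    and r6: "comm (Wm 0) (Wm k) = 0"
    and r7: "comm (Wp 0) (Wp k) = 0"
    using O unfolding Oq_rels_def by blast+
  have k1: "emb q * comm Bd (Wm k) = Wm 0 * Gt k - Gt k * Wm 0"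
    unfolding Bd_def
  proof (rule key1[OF E q qq])
    show "Wm 0 * Wm k = Wm k * Wm 0" using r6 unfolding comm_def by simp
    show "Wm k * Wp 0 - Wp 0 * Wm k = emb (inverse (q + inverse q)) * (Gt k - G k)"
      using r1 unfolding comm_def .
    show "emb q * Wm 0 * G k - emb (inverse q) * G k * Wm 0 =
          emb q * Gt k * Wm 0 - emb (inverse q) * Wm 0 * Gt k"
      using r2 r3 unfolding qcomm_def by simp
  qed
  have k2: "emb q * comm Bd (Wp k) = Wp 0 * Gt k - Gt k * Wp 0"
    unfolding Bd_def
  proof (rule key2[OF E q qq])
    show "Wp 0 * Wp k = Wp k * Wp 0" using r7 unfolding comm_def by simp
    show "Wm 0 * Wp k - Wp k * Wm 0 = emb (inverse (q + inverse q)) * (Gt k - G k)"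
      using r1b unfolding comm_def .
    show "emb q * G k * Wp 0 - emb (inverse q) * Wp 0 * G k =
          emb q * Wp 0 * Gt k - emb (inverse q) * Gt k * Wp 0"
      using r4 r5 unfolding qcomm_def by simp
  qed
  have f1: "Wm (Suc k) = Wp k
            - emb ((q - inverse q) / (q^2 - inverse (q^2))^2) * Wm 0 * Gt k
            + emb (q^2 / (q^2 - inverse (q^2))^2) * comm Bd (Wm k)"
  proof (rule fin1[OF E q D _ k1])
    show "emb q * (Gt k * Wm 0) - emb (inverse q) * (Wm 0 * Gt k) =
          emb (rho q) * Wm (Suc k) - emb (rho q) * Wp k"
      using r3 unfolding qcomm_def by (simp add: mult.assoc)
  qed
  have f2: "Wp (Suc k) = Wm k
            - emb ((q - inverse q) / (q^2 - inverse (q^2))^2) * Wp 0 * Gt k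
            - emb (1 / (q^2 - inverse (q^2))^2) * comm Bd (Wp k)"
  proof (rule fin2[OF E q D _ k2])
    show "emb q * (Wp 0 * Gt k) - emb (inverse q) * (Gt k * Wp 0) =
          emb (rho q) * Wp (Suc k) - emb (rho q) * Wm k"
      using r5 unfolding qcomm_def by (simp add: mult.assoc)
  qed
  show ?thesis using f1 f2 unfolding nk by simp
qed

end
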